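(* Let $q=p^e$ with $p$ a prime and $e\ge1$, let $r\ge2$, $m=2r$, and assume $(q,r)\ne(2,2)$. Let $D=\{x\in\mathbb{F}_{q^m}:\mathrm{Tr}_{q^r/q}(x^{q^r+1})=0\}$ and $\overline{\mathcal{C}_D}=\{(\mathrm{Tr}_{q^m/q}(bx)+c)_{x\in D}: b\in\mathbb{F}_{q^m},\ c\in\mathbb{F}_q\}$. Then $\overline{\mathcal{C}_D}$ is self-orthogonal, i.e. $\overline{\mathcal{C}_D}\subseteq\overline{\mathcal{C}_D}^{\perp}$.
   Context: $\mathrm{Tr}_{q^k/q}$ is the trace map from $\mathbb{F}_{q^k}$ to $\mathbb{F}_q$; the dual is with respect to the standard inner product on $\mathbb{F}_q^{|D|}$. *)

theory Defs
  imports "HOL-Computational_Algebra.Primes" "HOL-Library.FuncSet"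
begin

text \<open>We work in a finite field type 'a of cardinality q^m. The subfield F_{q^k}
  (for k dividing m) is the set of roots of X^(q^k) - X.\<close>

definition subfield_of_order :: "nat \<Rightarrow> ('a::{field,finite}) set" where
  "subfield_of_order Q = {x. x ^ Q = x}"

definition trace :: "nat \<Rightarrow> nat \<Rightarrow> 'a::{field,finite} \<Rightarrow> 'a" where
  "trace q k x = (\<Sum>i<k. x ^ (q ^ i))"

definition defset :: "nat \<Rightarrow> nat \<Rightarrow> ('a::{field,finite}) set" where
  "defset q r = {x. trace q r (x ^ (q ^ r + 1)) = 0}"

text \<open>Augmented code: codewords (Tr_{q^m/q}(b x) + c)_{x in D}, b in F_{q^m}, c in F_q,
  represented as functions on D (extensional, undefined outside D).\<close>
definition aug_code :: "nat \<Rightarrow> nat \<Rightarrow> ('a::{field,finite} \<Rightarrow> 'a) set" where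
  "aug_code q r = {restrict (\<lambda>x. trace q (2*r) (b * x) + c) (defset q r) | b c.
                    c \<in> subfield_of_order q}"

definition dual_code :: "('a::{field,finite}) set \<Rightarrow> nat \<Rightarrow> ('a \<Rightarrow> 'a) set \<Rightarrow> ('a \<Rightarrow> 'a) set" where
  "dual_code D q C = {v \<in> D \<rightarrow>\<^sub>E subfield_of_order q. \<forall>u\<in>C. (\<Sum>x\<in>D. u x * v x) = 0}"

end

theory Submission imports Defs "HOL-Computational_Algebra.Polynomial" begin


lemma card_UNIV_zero: "of_nat (card (UNIV :: 'a::{field,finite} set)) = (0::'a)"
proof -
  have "(\<Sum>y\<in>(UNIV::'a set). 1 + y) = (\<Sum>y\<in>UNIV. y)"
    by (rule sum.reindex_bij_witness[of _ "\<lambda>y. y - 1" "\<lambda>y. 1 + y"]) auto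
  thus ?thesis by (simp add: sum.distrib)
qed

lemma CHAR_eq:
  assumes "prime p" "card (UNIV :: 'a::{field,finite} set) = p ^ n"
  shows "CHAR('a) = p"
proof -
  have pos: "CHAR('a) > 0" by (rule finite_imp_CHAR_pos) simp
  have pr: "prime CHAR('a)" by (rule prime_CHAR_semidom[OF pos])
  have "CHAR('a) dvd p ^ n"
    using card_UNIV_zero[where 'a='a] assms(2) of_nat_eq_0_iff_char_dvd by metis
  hence "CHAR('a) dvd p" using pr prime_dvd_power by blast
  thus ?thesis using pr assms(1) primes_dvd_imp_eq by blast
qed

lemma fermat_field: "(x::'a::{field,finite}) ^ card (UNIV :: 'a set) = x"
proof (cases "x = 0")
  case False
  have "x * (\<Prod>y\<in>UNIV-{0}. x * y) = x * x ^ (card (UNIV :: 'a set) - 1) * \<Prod>(UNIV-{0})"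
    by (simp add: prod.distrib mult_ac)
  also have "x * x ^ (card (UNIV :: 'a set) - 1) = x ^ Suc (card (UNIV :: 'a set) - 1)"
    by (subst power_Suc) auto
  also have "Suc (card (UNIV :: 'a set) - 1) = card (UNIV :: 'a set)"
    using finite_UNIV_card_ge_0[where ?'a = 'a] by simp
  also have "(\<Prod>y\<in>UNIV-{0}. x * y) = (\<Prod>y\<in>UNIV-{0}. y)"
    by (rule prod.reindex_bij_witness[of _ "\<lambda>y. y / x" "\<lambda>y. x * y"]) (use False in auto)
  finally show ?thesis
    by simp
qed (use finite_UNIV_card_ge_0[where ?'a = 'a] in auto)

lemma root_bound:
  assumes "n > 0"
  shows "card {x::'a::field. x ^ n = c} \<le> n"
proof -
  let ?P = "monom 1 n + [:-c:] :: 'a poly"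
  have deg: "degree ?P = n"
    using assms by (subst degree_add_eq_left) (auto simp: degree_monom_eq)
  hence "?P \<noteq> 0" using assms by auto
  hence "card {x. poly ?P x = 0} \<le> n" using card_poly_roots_bound deg by metis
  moreover have "{x. poly ?P x = 0} = {x. x ^ n = c}" by (auto simp: poly_monom)
  ultimately show ?thesis by simp
qed

lemma root_bound2:
  assumes "n > 1"
  shows "card {x::'a::{field,finite}. x ^ n = x} \<le> n"
proof -
  have "{x::'a. x ^ n = x} \<subseteq> insert 0 {x. x ^ (n-1) = 1}"
  proof
    fix x :: 'a assume "x \<in> {x. x ^ n = x}"
    hence "x ^ (n - 1) * x = 1 * x" using assms by (simp add: power_Suc2[symmetric])
    thus "x \<in> insert 0 {x. x ^ (n - 1) = 1}" by auto
  qed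
  hence "card {x::'a. x ^ n = x} \<le> card (insert 0 {x::'a. x ^ (n-1) = 1})" by (intro card_mono) auto
  also have "\<dots> \<le> Suc (card {x::'a. x ^ (n-1) = 1})" by (simp add: card_insert_if)
  also have "\<dots> \<le> Suc (n - 1)"
  proof -
    have "card {x::'a. x^(n-1) = 1} \<le> n-1" by (rule root_bound) (use assms in auto)
    thus ?thesis by simp
  qed
  finally show ?thesis using assms by simp
qed



lemma cyc_shift: "f k = f 0 \<Longrightarrow> (\<Sum>i<k. f (Suc i)) = (\<Sum>i<k. (f i :: 'b::comm_monoid_add))"
proof (cases k)
  case (Suc m)
  assume h: "f k = f 0"
  have "(\<Sum>i<Suc m. f (Suc i)) = (\<Sum>i<m. f (Suc i)) + f (Suc m)" by (rule sum.lessThan_Suc)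
  also have "\<dots> = f 0 + (\<Sum>i<m. f (Suc i))" using h Suc by (simp add: add.commute)
  also have "\<dots> = (\<Sum>i<Suc m. f i)" by (rule sum.lessThan_Suc_shift[symmetric])
  finally show ?thesis using Suc by simp
qed simp

lemma pow_fix: "(c::'b::monoid_mult) ^ q = c \<Longrightarrow> c ^ (q ^ i) = c"
proof (induction i)
  case (Suc i)
  have "c ^ (q ^ Suc i) = (c ^ q) ^ (q ^ i)" by (simp add: power_mult)
  thus ?case using Suc by simp
qed simp

locale ctx =
  fixes p e r q Q :: nat and N :: "'a::{field,finite} \<Rightarrow> 'a"
  assumes p: "prime p" and e: "e \<ge> 1" and r: "r \<ge> 2" and q_def: "q = p ^ e" and Q_def: "Q = q ^ r"
    and card: "card (UNIV::'a set) = q ^ (2 * r)" and N_def: "N = (\<lambda>x. x ^ (Q + 1))"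
begin

lemma CHAR: "CHAR('a) = p"
  using CHAR_eq[OF p, of "e * (2 * r)"] card q_def by (simp add: power_mult)

lemma p2: "p \<ge> 2" using p prime_ge_2_nat by blast

lemma q_ge2: "q \<ge> 2"
proof -
  have "p ^ 1 \<le> p ^ e" using e p2 by (intro power_increasing) auto
  thus ?thesis using p2 q_def by simp
qed

lemma Q_eq: "Q = q * q ^ (r - 1)"
  using r Q_def by (metis Suc_diff_1 less_le_trans not_less_eq_eq numeral_2_eq_2 power_Suc zero_less_Suc)

lemma Q_ge: "Q \<ge> 4"
proof -
  have "q ^ 2 \<le> q ^ r" using r q_ge2 by (intro power_increasing) auto
  moreover have "2^2 \<le> q ^ 2" using q_ge2 by (intro power_mono) auto
  ultimately show ?thesis using Q_def by simp
qed

lemma qpow: "q ^ i = CHAR('a) ^ (e * i)"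
  using CHAR q_def by (simp add: power_mult)

lemma frob: "(x + y :: 'a) ^ (q ^ i) = x ^ (q ^ i) + y ^ (q ^ i)"
  using freshmans_dream'[of "q ^ i" "e * i" x y] CHAR p qpow by simp

lemma frob_sum: "(sum f A :: 'a) ^ (q ^ i) = (\<Sum>a\<in>A. f a ^ (q ^ i))"
  using freshmans_dream_sum'[of "q ^ i" "e * i" f A] CHAR p qpow by simp

lemma frob_minus: "(x - y :: 'a) ^ (q ^ i) = x ^ (q ^ i) - y ^ (q ^ i)"
proof -
  have "x ^ (q ^ i) = ((x - y) + y) ^ (q ^ i)" by simp
  also have "\<dots> = (x - y) ^ (q ^ i) + y ^ (q ^ i)" by (rule frob)
  finally show ?thesis by simp
qed

lemma frobQ: "(x + y :: 'a) ^ Q = x ^ Q + y ^ Q" using frob[of x y r] Q_def by simp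
lemma frobQ_minus: "(x - y :: 'a) ^ Q = x ^ Q - y ^ Q" using frob_minus[of x y r] Q_def by simp

lemma of_nat_q: "of_nat q = (0::'a)"
proof -
  have "p dvd q" using q_def e by (simp add: dvd_power)
  thus ?thesis using CHAR of_nat_eq_0_iff_char_dvd by metis
qed

lemma of_nat_Q: "of_nat Q = (0::'a)"
  using of_nat_q Q_eq by simp

lemma fermat: "(x::'a) ^ (Q * Q) = x"
proof -
  have "Q * Q = q ^ (2 * r)" using Q_def by (simp add: power_mult[symmetric] mult_2 power_add)
  thus ?thesis using fermat_field[of x] card by simp
qed

lemma fermat2: "(x::'a) ^ (q ^ (2 * r)) = x"
  using fermat_field[of x] card by simp

lemma trace_add: "trace q k (x + y :: 'a) = trace q k x + trace q k y"
  unfolding trace_def by (simp add: frob sum.distrib)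

lemma trace_sum: "trace q k (sum f A :: 'a) = (\<Sum>a\<in>A. trace q k (f a))"
  unfolding trace_def by (simp add: frob_sum sum.swap[of _ A])

lemma trace_0: "trace q k (0::'a) = 0"
  unfolding trace_def using q_ge2 by (simp add: power_0_left)

lemma trace_minus: "trace q k (x - y :: 'a) = trace q k x - trace q k y"
  unfolding trace_def by (simp add: frob_minus sum_subtractf)

lemma trace_scal: "(c::'a) ^ q = c \<Longrightarrow> trace q k (c * x) = c * trace q k x"
  unfolding trace_def by (simp add: power_mult_distrib pow_fix sum_distrib_left)

lemma trace_fix:
  assumes "(x::'a) ^ (q ^ k) = x"
  shows "(trace q k x) ^ q = trace q k x"
proof -
  have "(trace q k x) ^ (q ^ 1) = (\<Sum>i<k. (x ^ (q ^ i)) ^ (q ^ 1))"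
    unfolding trace_def by (rule frob_sum)
  also have "\<dots> = (\<Sum>i<k. x ^ (q ^ Suc i))"
    by (simp add: power_mult[symmetric] mult.commute)
  also have "\<dots> = (\<Sum>i<k. x ^ (q ^ i))"
    by (rule cyc_shift[of "\<lambda>i. x ^ (q ^ i)"]) (use assms in simp)
  finally show ?thesis unfolding trace_def by simp
qed

lemma N_mult: "N (x * y) = N x * N y" unfolding N_def by (simp add: power_mult_distrib)
lemma N_eq_0: "N x = 0 \<longleftrightarrow> x = 0" unfolding N_def using Q_ge by simp

lemma N_FQ: "N x ^ Q = N x"
proof -
  have "N x ^ Q = x ^ (Q * Q) * x ^ Q" unfolding N_def
    by (simp add: power_mult[symmetric] power_add[symmetric] algebra_simps)
  also have "\<dots> = N x" unfolding N_def by (simp add: fermat power_add)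
  finally show ?thesis .
qed

end


lemma nat_prod_eq:
  fixes a b x y :: nat
  assumes "a \<le> x" "b \<le> y" "a * b = x * y" "x > 0" "y > 0"
  shows "a = x \<and> b = y"
proof -
  have "a * b \<le> a * y" using assms(2) by simp
  hence "x * y \<le> a * y" using assms(3) by simp
  hence "x \<le> a" using assms(5) by simp
  hence ax: "a = x" using assms(1) by simp
  hence "x * b = x * y" using assms(3) by simp
  thus ?thesis using ax assms(4) by simp
qed

context ctx begin

lemma mu_facts:
  "card {z::'a. z ^ (Q + 1) = 1} = Q + 1 \<and> N ` (UNIV - {0}) = {y::'a. y ^ (Q - 1) = 1}
   \<and> card {y::'a. y ^ (Q - 1) = 1} = Q - 1"
proof -
  define M where "M = {z::'a. z ^ (Q + 1) = 1}"
  define Fs where "Fs = (UNIV - {0::'a})"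
  have fib: "card {x\<in>Fs. N x = a} = card M" if "a \<in> N ` Fs" for a
  proof -
    obtain x0 where x0: "x0 \<in> Fs" "a = N x0" using \<open>a \<in> N ` Fs\<close> by auto
    have x0nz: "x0 \<noteq> 0" using x0 Fs_def by auto
    have "{x\<in>Fs. N x = a} = (\<lambda>z. x0 * z) ` M"
    proof (intro equalityI subsetI)
      fix x assume "x \<in> {x\<in>Fs. N x = a}"
      hence x: "x \<noteq> 0" "N x = N x0" using x0 Fs_def by auto
      have "N (x / x0) = 1"
        using x x0nz N_eq_0[of x0] by (simp add: N_def power_divide)
      hence "x / x0 \<in> M" unfolding M_def N_def by simp
      moreover have "x = x0 * (x / x0)" using x0nz by simp
      ultimately show "x \<in> (\<lambda>z. x0 * z) ` M" by blast
    next
      fix x assume "x \<in> (\<lambda>z. x0 * z) ` M"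
      then obtain z where z: "z \<in> M" "x = x0 * z" by auto
      have "N z = 1" using z M_def N_def by simp
      hence "N x = a" using z x0 N_mult by simp
      moreover have "z \<noteq> 0" using \<open>N z = 1\<close> N_eq_0[of z] by simp
      hence "x \<noteq> 0" using z(2) x0nz by simp
      ultimately show "x \<in> {x\<in>Fs. N x = a}" using Fs_def by simp
    qed
    moreover have "inj_on (\<lambda>z. x0 * z) M" using x0nz by (intro inj_onI) simp
    ultimately show ?thesis by (simp add: card_image)
  qed
  have "(\<Sum>a\<in>N ` Fs. \<Sum>x\<in>{x\<in>Fs. N x = a}. (1::nat)) = (\<Sum>x\<in>Fs. 1)"
    by (rule sum.group) auto
  hence "card Fs = (\<Sum>a\<in>N ` Fs. card {x\<in>Fs. N x = a})"
    by (simp only: card_eq_sum)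
  also have "\<dots> = card (N ` Fs) * card M" using fib by simp
  finally have eq: "card (N ` Fs) * card M = Q * Q - 1" 
    using card Fs_def Q_def by (simp add: power_mult[symmetric] mult_2 power_add)
  have sub: "N ` Fs \<subseteq> {y. y ^ (Q - 1) = 1}"
  proof
    fix y assume "y \<in> N ` Fs"
    then obtain x where x: "x \<noteq> 0" "y = N x" using Fs_def by auto
    have "Q * Q > 0" using Q_ge by simp
    hence "x ^ (Q * Q - 1) * x = x ^ (Q * Q)" by (rule power_minus_mult)
    hence "x ^ (Q * Q - 1) = 1" using fermat[of x] x by simp
    moreover have "(Q + 1) * (Q - 1) = Q * Q - 1" by (simp add: algebra_simps diff_mult_distrib2)
    ultimately have "(x ^ (Q + 1)) ^ (Q - 1) = 1" by (metis power_mult)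
    thus "y \<in> {y. y ^ (Q - 1) = 1}" using x N_def by simp
  qed
  have c1: "card (N ` Fs) \<le> Q - 1"
    using card_mono[OF _ sub] root_bound[of "Q - 1" "1::'a"] Q_ge by simp
  have c2: "card M \<le> Q + 1" unfolding M_def by (rule root_bound) simp
  have "(Q - 1) * (Q + 1) = Q * Q - 1" by (simp add: algebra_simps diff_mult_distrib)
  hence both: "card (N ` Fs) = Q - 1 \<and> card M = Q + 1"
    using nat_prod_eq[OF c1 c2] eq Q_ge by simp
  have "card {y::'a. y ^ (Q - 1) = 1} \<le> Q - 1" using root_bound[of "Q - 1" "1::'a"] Q_ge by simp
  moreover have "card (N ` Fs) \<le> card {y::'a. y ^ (Q - 1) = 1}" using sub by (intro card_mono) auto
  ultimately have ceq: "card (N ` Fs) = card {y::'a. y ^ (Q - 1) = 1}" using both by linarith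
  hence "N ` Fs = {y. y ^ (Q - 1) = 1}"
    using sub by (intro card_subset_eq) auto
  thus ?thesis using both ceq M_def Fs_def by simp
qed

lemma fiber_card:
  assumes "(a::'a) ^ Q = a"
  shows "of_nat (card {x. N x = a}) = (1::'a)"
proof (cases "a = 0")
  case True
  hence "{x. N x = a} = {0}" using N_eq_0 by auto
  thus ?thesis by simp
next
  case False
  have "a ^ (Q - 1) * a = 1 * a" using assms Q_ge power_minus_mult[of Q a] by simp
  hence "a ^ (Q - 1) = 1" using False by simp
  hence "a \<in> N ` (UNIV - {0})" using mu_facts by simp
  then obtain x0 where x0: "x0 \<noteq> 0" "a = N x0" by auto
  have "{x. N x = a} = (\<lambda>z. x0 * z) ` {z. z ^ (Q + 1) = 1}"
  proof (intro equalityI subsetI)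
    fix x assume "x \<in> {x. N x = a}"
    hence x: "N x = N x0" using x0 by auto
    have "N (x / x0) = 1"
      using x x0 N_eq_0[of x0] by (simp add: N_def power_divide)
    hence "x / x0 \<in> {z. z ^ (Q + 1) = 1}" unfolding N_def by simp
    moreover have "x = x0 * (x / x0)" using x0 by simp
    ultimately show "x \<in> (\<lambda>z. x0 * z) ` {z. z ^ (Q + 1) = 1}" by blast
  next
    fix x assume "x \<in> (\<lambda>z. x0 * z) ` {z. z ^ (Q + 1) = 1}"
    then obtain z where z: "z ^ (Q + 1) = 1" "x = x0 * z" by auto
    have "N z = 1" using z N_def by simp
    thus "x \<in> {x. N x = a}" using z x0 N_mult by simp
  qed
  moreover have "inj_on (\<lambda>z. x0 * z) {z::'a. z ^ (Q + 1) = 1}" using x0 by (intro inj_onI) simp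
  ultimately have "card {x. N x = a} = Q + 1" using mu_facts by (simp add: card_image)
  thus ?thesis using of_nat_Q by simp
qed

definition K :: "'a set" where "K = {a. a ^ Q = a \<and> trace q r a = 0}"

lemma defset_eq: "defset q r = {x::'a. trace q r (N x) = 0}"
  unfolding defset_def N_def Q_def by simp

lemma sum_D: fixes h :: "'a \<Rightarrow> 'a" shows "(\<Sum>x\<in>defset q r. h (N x)) = (\<Sum>a\<in>K. h a)"
proof -
  have "(\<Sum>x\<in>defset q r. h (N x)) = (\<Sum>a\<in>K. \<Sum>x\<in>{x \<in> defset q r. N x = a}. h (N x))"
    by (rule sum.group[symmetric]) (auto simp: defset_eq K_def N_FQ)
  also have "\<dots> = (\<Sum>a\<in>K. of_nat (card {x. N x = a}) * h a)"
  proof (rule sum.cong[OF refl])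
    fix a assume a: "a \<in> K"
    have "{x \<in> defset q r. N x = a} = {x. N x = a}" using a by (auto simp: defset_eq K_def)
    thus "(\<Sum>x\<in>{x \<in> defset q r. N x = a}. h (N x)) = of_nat (card {x. N x = a}) * h a" by simp
  qed
  also have "\<dots> = (\<Sum>a\<in>K. h a)" using fiber_card by (simp add: K_def)
  finally show ?thesis .
qed

end


lemma pair_sum:
  fixes A :: "'b::comm_ring_1 set" and k :: 'b
  assumes "finite A" "\<forall>a\<in>A. a + k \<in> A" "\<forall>x::'b. x + x = 0" "k \<noteq> 0"
  shows "even (card A) \<and> sum id A = of_nat (card A div 2) * k"
  using assms
proof (induction "card A" arbitrary: A rule: less_induct)
  case less
  show ?case
  proof (cases "A = {}")
    case True thus ?thesis by simp
  next
    case False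
    then obtain a where a: "a \<in> A" by auto
    have ak: "a + k \<in> A" using less.prems a by auto
    have ne: "a + k \<noteq> a" using less.prems(4) by simp
    define A' where "A' = A - {a, a + k}"
    have neg: "- k = k" using less.prems(3) by (metis add_eq_0_iff)
    have cl: "\<forall>b\<in>A'. b + k \<in> A'"
    proof
      fix b assume b: "b \<in> A'"
      hence "b + k \<in> A" "b \<noteq> a" "b \<noteq> a + k" using less.prems A'_def by auto
      moreover have "b + k \<noteq> a"
      proof
        assume "b + k = a"
        hence "b = a - k" by (simp add: algebra_simps)
        also have "\<dots> = a + - k" by (rule diff_conv_add_uminus)
        also have "\<dots> = a + k" using neg by simp
        finally show False using \<open>b \<noteq> a + k\<close> by simp
      qed
      ultimately show "b + k \<in> A'" using A'_def by auto
    qed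
    have cA: "card A = Suc (Suc (card A'))"
    proof -
      have le: "card {a, a + k} \<le> card A" using a ak less.prems(1) by (intro card_mono) auto
      have "card A' = card A - card {a, a + k}"
        unfolding A'_def using a ak less.prems(1) by (intro card_Diff_subset) auto
      hence "card A = card A' + card {a, a + k}" using le by simp
      thus ?thesis using ne by simp
    qed
    have IH: "even (card A') \<and> sum id A' = of_nat (card A' div 2) * k"
      using less.hyps[of A'] cA cl less.prems A'_def by auto
    have "sum id A = a + (a + k) + sum id A'"
    proof -
      have Aeq: "A = insert a (insert (a + k) A')" using a ak A'_def by auto
      have fin: "finite A'" using less.prems(1) A'_def by simp
      have n1: "a \<notin> insert (a + k) A'" using ne A'_def by auto
      have n2: "a + k \<notin> A'" using A'_def by auto
      have "sum id A = sum id (insert a (insert (a + k) A'))" using Aeq by (rule arg_cong)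
      also have "\<dots> = a + sum id (insert (a + k) A')" using fin n1 by (subst sum.insert) auto
      also have "\<dots> = a + ((a + k) + sum id A')" using fin n2 by (subst sum.insert) auto
      finally show ?thesis by (simp only: add.assoc)
    qed
    also have "\<dots> = (a + a) + (k + sum id A')" by (simp only: add.assoc)
    also have "\<dots> = k + sum id A'" using less.prems(3) by simp
    finally show ?thesis using IH cA by (simp add: algebra_simps)
  qed
qed

context ctx begin

lemma K_add: "a \<in> K \<Longrightarrow> b \<in> K \<Longrightarrow> a + b \<in> K"
  unfolding K_def by (simp add: frobQ trace_add)
lemma K_minus: "a \<in> K \<Longrightarrow> b \<in> K \<Longrightarrow> a - b \<in> K"
  unfolding K_def by (simp add: frobQ_minus trace_minus)
lemma K_scal: "(c::'a) ^ q = c \<Longrightarrow> a \<in> K \<Longrightarrow> c * a \<in> K"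
  unfolding K_def using pow_fix[of c q r] Q_def by (simp add: power_mult_distrib trace_scal)

lemma card_FQ: "card {y::'a. y ^ Q = y} \<ge> Q"
proof -
  have "insert 0 {y::'a. y ^ (Q - 1) = 1} \<subseteq> {y. y ^ Q = y}"
  proof
    fix y :: 'a assume "y \<in> insert 0 {y. y ^ (Q - 1) = 1}"
    moreover have "y ^ (Q - 1) * y = y ^ Q" using Q_ge by (intro power_minus_mult) simp
    ultimately show "y \<in> {y. y ^ Q = y}" using Q_ge by (auto simp: power_0_left)
  qed
  hence "card (insert 0 {y::'a. y ^ (Q - 1) = 1}) \<le> card {y::'a. y ^ Q = y}" by (intro card_mono) auto
  moreover have "0 \<notin> {y::'a. y ^ (Q - 1) = 1}" using Q_ge by (simp add: power_0_left)
  ultimately show ?thesis using mu_facts Q_ge by simp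
qed

lemma card_K: "card K \<ge> q ^ (r - 1)"
proof -
  define FQ where "FQ = {y::'a. y ^ Q = y}"
  define T where "T = (\<lambda>y::'a. trace q r y)"
  have img: "T ` FQ \<subseteq> {y. y ^ q = y}"
    unfolding FQ_def T_def using trace_fix Q_def by auto
  have cimg: "card (T ` FQ) \<le> q"
  proof -
    have "card (T ` FQ) \<le> card {y::'a. y ^ q = y}" using img by (intro card_mono) auto
    also have "\<dots> \<le> q" by (rule root_bound2) (use q_ge2 in simp)
    finally show ?thesis .
  qed
  have fib: "card {y\<in>FQ. T y = c} \<le> card K" if cT: "c \<in> T ` FQ" for c
  proof -
    obtain t0 where t0: "t0 \<in> FQ" "T t0 = c" using cT by blast
    have "{y\<in>FQ. T y = c} \<subseteq> (\<lambda>k. t0 + k) ` K"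
    proof
      fix y assume y: "y \<in> {y\<in>FQ. T y = c}"
      have "y - t0 \<in> K" using y t0 unfolding K_def FQ_def T_def by (simp add: frobQ_minus trace_minus)
      moreover have "y = t0 + (y - t0)" by simp
      ultimately show "y \<in> (\<lambda>k. t0 + k) ` K" by blast
    qed
    hence "card {y\<in>FQ. T y = c} \<le> card ((\<lambda>k. t0 + k) ` K)" by (intro card_mono) auto
    also have "\<dots> \<le> card K" by (rule card_image_le) simp
    finally show ?thesis .
  qed
  have "(\<Sum>c\<in>T ` FQ. \<Sum>x\<in>{x\<in>FQ. T x = c}. (1::nat)) = (\<Sum>x\<in>FQ. 1)"
    by (rule sum.group) auto
  hence "card FQ = (\<Sum>c\<in>T ` FQ. card {x\<in>FQ. T x = c})"
    by (simp only: card_eq_sum)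
  also have "\<dots> \<le> (\<Sum>c\<in>T ` FQ. card K)" using fib by (intro sum_mono) auto
  also have "\<dots> = card (T ` FQ) * card K" by simp
  also have "\<dots> \<le> q * card K" using cimg by simp
  finally have "Q \<le> q * card K" using card_FQ FQ_def by simp
  hence "q * q ^ (r - 1) \<le> q * card K" using Q_eq by simp
  thus ?thesis using q_ge2 by simp
qed

lemma K_nonzero: "\<exists>k\<in>K. k \<noteq> 0"
proof (rule ccontr)
  assume "\<not> ?thesis"
  hence "K \<subseteq> {0}" by auto
  hence "card K \<le> card {0::'a}" by (intro card_mono) auto
  hence "card K \<le> 1" by simp
  moreover have "q ^ 1 \<le> q ^ (r - 1)" using r q_ge2 by (intro power_increasing) auto
  ultimately show False using card_K q_ge2 by simp
qed

lemma K_card0: "of_nat (card K) = (0::'a)"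
proof -
  obtain k0 where k0: "k0 \<in> K" "k0 \<noteq> 0" using K_nonzero by auto
  have "(\<Sum>a\<in>K. a + k0) = (\<Sum>a\<in>K. a)"
    by (rule sum.reindex_bij_witness[of _ "\<lambda>a. a - k0" "\<lambda>a. a + k0"])
       (use k0 in \<open>auto intro: K_add K_minus\<close>)
  hence "of_nat (card K) * k0 = 0" by (simp add: sum.distrib)
  thus ?thesis using k0 by simp
qed

lemma two_fix: "(2::'a) ^ (q ^ i) = 2"
proof -
  have "(1 + 1 :: 'a) ^ (q ^ i) = 1 ^ (q ^ i) + 1 ^ (q ^ i)" by (rule frob)
  thus ?thesis by (simp only: one_add_one power_one)
qed

lemma K_sum0:
  assumes "(q, r) \<noteq> (2, 2)"
  shows "(\<Sum>a\<in>K. a) = 0"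
proof (cases "p = 2")
  case False
  have "(2::'a) \<noteq> 0"
  proof
    assume "(2::'a) = 0"
    hence "of_nat 2 = (0::'a)" by simp
    hence "p dvd 2" using CHAR of_nat_eq_0_iff_char_dvd by metis
    thus False using False p by (metis primes_dvd_imp_eq two_is_prime_nat)
  qed
  have h2: "(2::'a) ^ q = 2" using two_fix[of 1] by simp
  have hh: "(1 / 2 :: 'a) ^ q = 1 / 2" using h2 by (simp add: power_divide)
  have half: "b / 2 \<in> K" if "b \<in> K" for b
  proof -
    have "(1/2) * b \<in> K" by (rule K_scal[OF hh that])
    thus ?thesis by simp
  qed
  have dbl: "2 * b \<in> K" if "b \<in> K" for b by (rule K_scal[OF h2 that])
  have "(\<Sum>a\<in>K. 2 * a) = (\<Sum>a\<in>K. a)"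
    by (rule sum.reindex_bij_witness[of _ "\<lambda>a. a / 2" "\<lambda>a. 2 * a"])
       (use \<open>(2::'a) \<noteq> 0\<close> half dbl in auto)
  hence "2 * (\<Sum>a\<in>K. a) = (\<Sum>a\<in>K. a)" by (simp add: sum_distrib_left)
  hence "(\<Sum>a\<in>K. a) + (\<Sum>a\<in>K. a) = (\<Sum>a\<in>K. a)" by (simp only: mult_2)
  thus ?thesis by (metis add_cancel_left_right)
next
  case True
  have "of_nat 2 = (0::'a)" unfolding of_nat_eq_0_iff_char_dvd using CHAR True by simp
  hence two0: "(2::'a) = 0" by simp
  have xx: "\<forall>x::'a. x + x = 0"
  proof
    fix x :: 'a have "x + x = 2 * x" by (rule mult_2[symmetric])
    thus "x + x = 0" using two0 by (metis mult_zero_left)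
  qed
  have "q ^ 2 \<le> q ^ (r - 1) \<or> q \<ge> 4"
  proof (cases "e = 1")
    case True
    hence "q = 2" using q_def \<open>p = 2\<close> by simp
    hence "r \<ge> 3" using assms r by auto
    thus ?thesis using q_ge2 by (intro disjI1 power_increasing) auto
  next
    case False
    hence "p ^ 2 \<le> p ^ e" using e p2 by (intro power_increasing) auto
    thus ?thesis using q_def \<open>p = 2\<close> by simp
  qed
  moreover have "q ^ 1 \<le> q ^ (r - 1)" using r q_ge2 by (intro power_increasing) auto
  hence q1: "q \<le> q ^ (r - 1)" by simp
  moreover have "(2::nat) ^ 2 \<le> q ^ 2" using q_ge2 by (intro power_mono) auto
  hence q2: "4 \<le> q ^ 2" by simp
  ultimately have "4 \<le> q ^ (r - 1)" using q1 q2 by (meson order.trans)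
  hence c3: "card K \<ge> 3" using card_K by linarith
  have "card K - card {0::'a, 0} \<le> card (K - {0, 0})" by (rule diff_card_le_card_Diff) simp
  hence "card (K - {0}) > 0" using c3 by simp
  hence "K - {0} \<noteq> {}" by (metis card.empty less_irrefl)
  then obtain k0 where k0: "k0 \<in> K" "k0 \<noteq> 0" by auto
  have "card K - card {0::'a, k0} \<le> card (K - {0, k0})" by (rule diff_card_le_card_Diff) simp
  moreover have "card {0::'a, k0} \<le> 2" by (simp add: card_insert_if)
  ultimately have "card (K - {0, k0}) > 0" using c3 by simp
  hence "K - {0, k0} \<noteq> {}" by (metis card.empty less_irrefl)
  then obtain k1 where "k1 \<in> K" "k1 \<noteq> 0" "k1 \<noteq> k0" by auto
  hence k: "k0 \<in> K" "k1 \<in> K" "k0 \<noteq> 0" "k1 \<noteq> 0" "k0 \<noteq> k1" using k0 by auto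
  have fK: "finite K" by simp
  have cl0: "\<forall>a\<in>K. a + k0 \<in> K" using k(1) K_add by blast
  have cl1: "\<forall>a\<in>K. a + k1 \<in> K" using k(2) K_add by blast
  have s0: "sum id K = of_nat (card K div 2) * k0"
    using pair_sum[OF fK cl0 xx k(3)] by (rule conjunct2)
  have s1: "sum id K = of_nat (card K div 2) * k1"
    using pair_sum[OF fK cl1 xx k(4)] by (rule conjunct2)
  have "of_nat (card K div 2) * (k0 - k1) = (0::'a)" using s0 s1 by (simp add: algebra_simps)
  hence "of_nat (card K div 2) = (0::'a)" using k by simp
  thus ?thesis using s0 by simp
qed

end


context ctx begin

abbreviation "DD \<equiv> (defset q r :: 'a set)"

lemma exists_zeta:
  assumes "0 < d" "d < Q + 1"
  shows "\<exists>z::'a. z ^ (Q + 1) = 1 \<and> z ^ d \<noteq> 1"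
proof (rule ccontr)
  assume "\<not> ?thesis"
  hence "{z::'a. z ^ (Q + 1) = 1} \<subseteq> {z. z ^ d = 1}" by auto
  hence "card {z::'a. z ^ (Q + 1) = 1} \<le> card {z::'a. z ^ d = 1}" by (intro card_mono) auto
  also have "\<dots> \<le> d" by (rule root_bound) (use assms in simp)
  finally show False using mu_facts assms by simp
qed

lemma D_inv:
  fixes g :: "'a \<Rightarrow> 'a"
  assumes z: "z ^ (Q + 1) = 1"
  shows "(\<Sum>x\<in>DD. g (z * x)) = (\<Sum>x\<in>DD. g x)"
proof -
  have Nz: "N z = 1" using z N_def by simp
  have z0: "z \<noteq> 0"
  proof
    assume "z = 0"
    hence "N z = 0" using N_eq_0 by simp
    thus False using Nz by simp
  qed
  have m1: "z * x \<in> DD" if "x \<in> DD" for x using that Nz by (simp add: defset_eq N_mult)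
  have m2: "x / z \<in> DD" if "x \<in> DD" for x
  proof -
    have "N (x / z) = N x / N z" unfolding N_def by (simp add: power_divide)
    thus ?thesis using that Nz by (simp add: defset_eq)
  qed
  show ?thesis
    by (rule sum.reindex_bij_witness[of _ "\<lambda>x. x / z" "\<lambda>x. z * x"]) (use z0 m1 m2 in auto)
qed

lemma S_zero:
  assumes "z ^ (Q + 1) = (1::'a)" "z ^ k \<noteq> 1"
  shows "(\<Sum>x\<in>DD. x ^ k) = 0"
proof -
  have "(\<Sum>x\<in>DD. (z * x) ^ k) = (\<Sum>x\<in>DD. x ^ k)" by (rule D_inv[OF assms(1)])
  hence "z ^ k * (\<Sum>x\<in>DD. x ^ k) = 1 * (\<Sum>x\<in>DD. x ^ k)"
    by (simp add: power_mult_distrib sum_distrib_left)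
  thus ?thesis using assms(2) by (metis mult_cancel_right)
qed

lemma S1: "(\<Sum>x\<in>DD. x) = 0"
proof -
  have "\<exists>z::'a. z ^ (Q + 1) = 1 \<and> z ^ 1 \<noteq> 1" by (rule exists_zeta) (use Q_ge in auto)
  then obtain z :: 'a where "z ^ (Q + 1) = 1" "z ^ 1 \<noteq> 1" by blast
  thus ?thesis using S_zero[of z 1] by simp
qed

lemma cardD: "of_nat (card DD) = (0::'a)"
proof -
  have "of_nat (card DD) = (\<Sum>x\<in>DD. (\<lambda>_. (1::'a)) (N x))" by simp
  also have "\<dots> = (\<Sum>a\<in>K. 1)" by (rule sum_D)
  also have "\<dots> = 0" using K_card0 by simp
  finally show ?thesis .
qed

lemma S2:
  assumes "j < 2 * r" "(q, r) \<noteq> (2, 2)"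
  shows "(\<Sum>x\<in>DD. x ^ (1 + q ^ j)) = 0"
proof -
  consider "j < r" | "j = r" | "j > r" by linarith
  thus ?thesis
  proof cases
    case 1
    have "q ^ j < q ^ r" using 1 q_ge2 by (intro power_strict_increasing) auto
    hence "1 + q ^ j < Q + 1" using Q_def by simp
    then obtain z :: 'a where "z ^ (Q + 1) = 1" "z ^ (1 + q ^ j) \<noteq> 1" using exists_zeta[of "1 + q ^ j"] by auto
    thus ?thesis by (rule S_zero)
  next
    case 2
    have "(\<Sum>x\<in>DD. x ^ (1 + q ^ j)) = (\<Sum>x\<in>DD. id (N x))" using 2 Q_def N_def by (simp add: add.commute)
    also have "\<dots> = (\<Sum>a\<in>K. id a)" by (rule sum_D)
    also have "\<dots> = 0" using K_sum0[OF assms(2)] by simp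
    finally show ?thesis .
  next
    case 3
    define j' where "j' = j - r"
    have j': "j = r + j'" "1 \<le> j'" "j' < r" using 3 assms(1) j'_def by auto
    have "q ^ 1 \<le> q ^ j'" using j' q_ge2 by (intro power_increasing) auto
    hence "2 \<le> q ^ j'" using q_ge2 by simp
    hence d0: "0 < q ^ j' - 1" by linarith
    have "q ^ j' < q ^ r" using j' q_ge2 by (intro power_strict_increasing) auto
    hence "q ^ j' - 1 < Q + 1" using Q_def by simp
    then obtain z :: 'a where z: "z ^ (Q + 1) = 1" "z ^ (q ^ j' - 1) \<noteq> 1" using exists_zeta d0 by blast
    have z0: "z \<noteq> 0"
    proof
      assume "z = 0"
      with z(1) show False by simp
    qed
    define w where "w = z ^ Q"
    have wz: "w * z = 1" using z w_def by (simp add: power_Suc2[symmetric])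
    have w0: "w \<noteq> 0" using wz by auto
    have "z ^ (1 + q ^ j) \<noteq> 1"
    proof
      assume h: "z ^ (1 + q ^ j) = 1"
      have "q ^ j = Q * q ^ j'" using j' Q_def by (simp add: power_add)
      hence "z ^ (q ^ j) = w ^ (q ^ j')" using w_def by (simp add: power_mult)
      hence e1: "z * w ^ (q ^ j') = 1" using h by simp
      have e2: "w ^ (q ^ j') * z ^ (q ^ j') = 1" using wz by (metis power_mult_distrib power_one)
      have "z * w ^ (q ^ j') = z ^ (q ^ j') * w ^ (q ^ j')" using e1 e2 by (simp add: mult.commute)
      hence "z = z ^ (q ^ j')" using w0 by simp
      also have "\<dots> = z ^ (q ^ j' - 1) * z"
      proof -
        have qpos: "0 < q ^ j'" using d0 by linarith
        show ?thesis by (rule power_minus_mult[symmetric, OF qpos])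
      qed
      finally have "1 * z = z ^ (q ^ j' - 1) * z" by simp
      hence "z ^ (q ^ j' - 1) = 1" using z0 by (metis mult_cancel_right)
      thus False using z by simp
    qed
    thus ?thesis by (rule S_zero[OF z(1)])
  qed
qed

end


context ctx begin

abbreviation "Tr \<equiv> (trace q (2 * r) :: 'a \<Rightarrow> 'a)"

lemma Tr2_fix: "(Tr y) ^ q = Tr y"
  by (rule trace_fix) (rule fermat2)

lemma L1: "(\<Sum>x\<in>DD. Tr (b * x)) = 0"
proof -
  have "(\<Sum>x\<in>DD. Tr (b * x)) = Tr (\<Sum>x\<in>DD. b * x)" by (rule trace_sum[symmetric])
  also have "\<dots> = Tr (b * (\<Sum>x\<in>DD. x))" by (simp add: sum_distrib_left)
  also have "\<dots> = 0" using S1 trace_0 by simp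
  finally show ?thesis .
qed

lemma L2:
  assumes "(q, r) \<noteq> (2, 2)"
  shows "(\<Sum>x\<in>DD. x * Tr (b * x)) = 0"
proof -
  have "(\<Sum>x\<in>DD. x * Tr (b * x)) = (\<Sum>x\<in>DD. \<Sum>j<2*r. b ^ (q ^ j) * x ^ (1 + q ^ j))"
    unfolding trace_def by (simp add: sum_distrib_left power_mult_distrib power_add mult_ac)
  also have "\<dots> = (\<Sum>j<2*r. b ^ (q ^ j) * (\<Sum>x\<in>DD. x ^ (1 + q ^ j)))"
    by (simp add: sum.swap[of _ DD] sum_distrib_left)
  also have "\<dots> = 0" using S2[OF _ assms] by simp
  finally show ?thesis .
qed

lemma L3:
  assumes "(q, r) \<noteq> (2, 2)"
  shows "(\<Sum>x\<in>DD. Tr (b1 * x) * Tr (b2 * x)) = 0"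
proof -
  have pt: "Tr (b1 * x) * Tr (b2 * x) = Tr (b1 * (x * Tr (b2 * x)))" for x
  proof -
    have "Tr (b1 * x) * Tr (b2 * x) = Tr (b2 * x) * Tr (b1 * x)" by (simp add: mult.commute)
    also have "\<dots> = Tr (Tr (b2 * x) * (b1 * x))" by (rule trace_scal[symmetric, OF Tr2_fix])
    also have "Tr (b2 * x) * (b1 * x) = b1 * (x * Tr (b2 * x))" by (simp add: mult_ac)
    finally show ?thesis .
  qed
  have "(\<Sum>x\<in>DD. Tr (b1 * x) * Tr (b2 * x)) = (\<Sum>x\<in>DD. Tr (b1 * (x * Tr (b2 * x))))"
    by (simp only: pt)
  also have "\<dots> = Tr (\<Sum>x\<in>DD. b1 * (x * Tr (b2 * x)))" by (rule trace_sum[symmetric])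
  also have "\<dots> = Tr (b1 * (\<Sum>x\<in>DD. x * Tr (b2 * x)))" by (simp add: sum_distrib_left)
  also have "\<dots> = 0" using L2[OF assms] trace_0 by simp
  finally show ?thesis .
qed

lemma main:
  assumes "(q, r) \<noteq> (2, 2)"
  shows "aug_code q r \<subseteq> dual_code DD q (aug_code q r)"
proof
  fix v :: "'a \<Rightarrow> 'a" assume "v \<in> aug_code q r"
  then obtain b2 c2 where v: "v = restrict (\<lambda>x. Tr (b2 * x) + c2) DD" "c2 \<in> subfield_of_order q"
    unfolding aug_code_def by blast
  have c2: "c2 ^ q = c2" using v(2) unfolding subfield_of_order_def by simp
  show "v \<in> dual_code DD q (aug_code q r)" unfolding dual_code_def
  proof (intro CollectI conjI ballI)
    show "v \<in> DD \<rightarrow>\<^sub>E subfield_of_order q"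
      unfolding v(1) restrict_PiE_iff subfield_of_order_def
      using frob[of _ c2 1] Tr2_fix c2 by simp
  next
    fix u :: "'a \<Rightarrow> 'a" assume "u \<in> aug_code q r"
    then obtain b1 c1 where u: "u = restrict (\<lambda>x. Tr (b1 * x) + c1) DD"
      unfolding aug_code_def by blast
    have pt: "(Tr (b1 * x) + c1) * (Tr (b2 * x) + c2)
        = Tr (b1 * x) * Tr (b2 * x) + (c2 * Tr (b1 * x) + (c1 * Tr (b2 * x) + c1 * c2))" for x
      by (simp add: algebra_simps)
    have "(\<Sum>x\<in>DD. u x * v x) = (\<Sum>x\<in>DD. (Tr (b1 * x) + c1) * (Tr (b2 * x) + c2))"
      by (rule sum.cong) (simp_all add: u v)
    also have "\<dots> = (\<Sum>x\<in>DD. Tr (b1 * x) * Tr (b2 * x)) + (c2 * (\<Sum>x\<in>DD. Tr (b1 * x))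
                    + (c1 * (\<Sum>x\<in>DD. Tr (b2 * x)) + of_nat (card DD) * (c1 * c2)))"
      by (simp only: pt sum.distrib sum_distrib_left sum_constant)
    also have "\<dots> = 0" using L1 L3[OF assms] cardD by simp
    finally show "(\<Sum>x\<in>DD. u x * v x) = 0" .
  qed
qed

end

theorem theorem3p8:
  fixes p e r :: nat
  assumes "prime p" and "e \<ge> 1" and "r \<ge> 2"
    and "card (UNIV :: 'a::{field,finite} set) = (p ^ e) ^ (2 * r)"
    and "(p ^ e, r) \<noteq> (2, 2)"
  shows "aug_code (p ^ e) r \<subseteq> dual_code (defset (p ^ e) r :: 'a set) (p ^ e) (aug_code (p ^ e) r)"
proof -
  interpret ctx p e r "p ^ e" "(p ^ e) ^ r" "\<lambda>x::'a. x ^ ((p ^ e) ^ r + 1)"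
    by unfold_locales (use assms in auto)
  show ?thesis by (rule main[OF assms(5)])
qed


end
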